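(* Fix $\omega\in(\frac\pi2,\pi)$ and $q_0$ with $0<q_0<\min\{\frac1{\sqrt2}\sin\omega,\sqrt2(1-\frac\omega\pi)\}$. For each $q\in(0,q_0]$ let $(a_q,f_q,g_q)\in\mathcal C_q$ with $0\le f_q\le\frac\pi2$ be a minimizer of $L$ over $\mathcal C_q$ (which solves (4)–(6)). Then the electric charge $$Q_e(q)=2\int_0^\infty a_q^2(r)\,g_q(r)\,dr$$ satisfies $Q_e(q)\to0$ as $q\to0^+$.
   Context: Fix $\kappa>0$; $'=d/dr$. Equations (4)–(6): $a''=\frac{1}{r^2}a(a^2-1)+\frac14 a\sin^2f+\kappa a\sin^2f\,(f')^2+\frac{1}{r^2}\kappa a^3\sin^4f-\frac{ag^2}{2}$; $8\kappa(a^2\sin^2f\,f')'+(r^2f')'=2a^2\sin f\cos f+8\kappa a^2\sin f\cos f\,(f')^2+\frac{8\kappa a^4\sin^3f\cos f}{r^2}$; $(r^2g')'=2a^2g$. Define $\mathcal E_1=2\big(2(a')^2+\frac{(a^2-1)^2}{r^2}\big)+\frac12\big(r^2(f')^2+2a^2\sin^2f\big)+2\kappa a^2\sin^2f\big(2(f')^2+\frac{a^2\sin^2f}{r^2}\big)$, $\mathcal E_2=r^2(g')^2+2a^2g^2$, $L(a,f,g)=\int_0^\infty(\mathcal E_1-\mathcal E_2)\,dr$, $E(a,f,g)=\int_0^\infty(\mathcal E_1+\mathcal E_2)\,dr$, and for functions $a,G$, $E_2(a,G)=\int_0^\infty(r^2(G')^2+2a^2G^2)\,dr$. For $q>0$,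 the admissible set $\mathcal A_q$ consists of triples $(a,f,g)$ of continuous functions on $[0,\infty)$ that are absolutely continuous on every compact subinterval of $(0,\infty)$, satisfy $a(0)=1$, $\lim_{r\to\infty}a(r)=0$, $f(0)=0$, $\lim_{r\to\infty}f(r)=\pi-\omega$, $\lim_{r\to\infty}g(r)=q$, and have $E(a,f,g)<\infty$. The constrained class $\mathcal C_q$ consists of those $(a,f,g)\in\mathcal A_q$ such that $\int_0^\infty(r^2g'G'+2a^2gG)\,dr=0$ for every function $G$ on $(0,\infty)$, absolutely continuous on compact subintervals of $(0,\infty)$, with $G(r)\to0$ as $r\to\infty$ and $E_2(a,G)<\infty$. *)

theory Defs
  imports "HOL-Analysis.Analysis"
begin

definition abs_cont_on :: "real \<Rightarrow> real \<Rightarrow> (real \<Rightarrow> real) \<Rightarrow> bool" where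
  "abs_cont_on c d h \<longleftrightarrow>
     (\<forall>\<epsilon>>0. \<exists>\<delta>>0. \<forall>(n::nat) (x::nat \<Rightarrow> real) (y::nat \<Rightarrow> real).
        (\<forall>i<n. c \<le> x i \<and> x i \<le> y i \<and> y i \<le> d) \<and>
        (\<forall>i<n. \<forall>j<n. i \<noteq> j \<longrightarrow> y i \<le> x j \<or> y j \<le> x i) \<and>
        (\<Sum>i<n. y i - x i) < \<delta>
        \<longrightarrow> (\<Sum>i<n. \<bar>h (y i) - h (x i)\<bar>) < \<epsilon>)"

definition loc_abs_cont :: "(real \<Rightarrow> real) \<Rightarrow> bool" where
  "loc_abs_cont h \<longleftrightarrow> (\<forall>c d. 0 < c \<longrightarrow> c \<le> d \<longrightarrow> abs_cont_on c d h)"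

text \<open>Energy densities; the derivative is the (a.e. defined) classical derivative.\<close>
definition dens1 :: "real \<Rightarrow> (real \<Rightarrow> real) \<Rightarrow> (real \<Rightarrow> real) \<Rightarrow> real \<Rightarrow> real" where
  "dens1 \<kappa> a f r =
     2 * (2 * (deriv a r)^2 + (a r ^ 2 - 1)^2 / r^2)
     + 1/2 * (r^2 * (deriv f r)^2 + 2 * a r ^ 2 * (sin (f r))^2)
     + 2 * \<kappa> * a r ^ 2 * (sin (f r))^2 *
         (2 * (deriv f r)^2 + a r ^ 2 * (sin (f r))^2 / r^2)"

definition dens2 :: "(real \<Rightarrow> real) \<Rightarrow> (real \<Rightarrow> real) \<Rightarrow> real \<Rightarrow> real" where
  "dens2 a g r = r^2 * (deriv g r)^2 + 2 * a r ^ 2 * (g r)^2"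

definition energy :: "real \<Rightarrow> (real \<Rightarrow> real) \<Rightarrow> (real \<Rightarrow> real) \<Rightarrow> (real \<Rightarrow> real) \<Rightarrow> ennreal" where
  "energy \<kappa> a f g = (\<integral>\<^sup>+ r\<in>{0<..}. ennreal (dens1 \<kappa> a f r + dens2 a g r) \<partial>lebesgue)"

definition energy2 :: "(real \<Rightarrow> real) \<Rightarrow> (real \<Rightarrow> real) \<Rightarrow> ennreal" where
  "energy2 a G = (\<integral>\<^sup>+ r\<in>{0<..}. ennreal (dens2 a G r) \<partial>lebesgue)"

definition Lfun :: "real \<Rightarrow> (real \<Rightarrow> real) \<Rightarrow> (real \<Rightarrow> real) \<Rightarrow> (real \<Rightarrow> real) \<Rightarrow> real" where
  "Lfun \<kappa> a f g = (LINT r:{0<..}|lebesgue. dens1 \<kappa> a f r - dens2 a g r)"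

definition admissible :: "real \<Rightarrow> real \<Rightarrow> real \<Rightarrow>
    ((real \<Rightarrow> real) \<times> (real \<Rightarrow> real) \<times> (real \<Rightarrow> real)) set" where
  "admissible \<kappa> \<omega> q = {(a, f, g).
     continuous_on {0..} a \<and> continuous_on {0..} f \<and> continuous_on {0..} g \<and>
     loc_abs_cont a \<and> loc_abs_cont f \<and> loc_abs_cont g \<and>
     a 0 = 1 \<and> (a \<longlongrightarrow> 0) at_top \<and>
     f 0 = 0 \<and> (f \<longlongrightarrow> pi - \<omega>) at_top \<and>
     (g \<longlongrightarrow> q) at_top \<and>
     energy \<kappa> a f g < \<infinity>}"

definition constrained :: "real \<Rightarrow> real \<Rightarrow> real \<Rightarrow>
    ((real \<Rightarrow> real) \<times> (real \<Rightarrow> real) \<times> (real \<Rightarrow> real)) set" where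
  "constrained \<kappa> \<omega> q = {(a, f, g). (a, f, g) \<in> admissible \<kappa> \<omega> q \<and>
     (\<forall>G. loc_abs_cont G \<longrightarrow> (G \<longlongrightarrow> 0) at_top \<longrightarrow> energy2 a G < \<infinity> \<longrightarrow>
        (LINT r:{0<..}|lebesgue. r^2 * deriv g r * deriv G r + 2 * a r ^ 2 * g r * G r) = 0)}"

definition charge :: "(real \<Rightarrow> real) \<Rightarrow> (real \<Rightarrow> real) \<Rightarrow> real" where
  "charge a g = 2 * (LINT r:{0<..}|lebesgue. a r ^ 2 * g r)"

end

theory Submission
  imports Defs
begin

definition c0 :: real where "c0 = (SOME D::real. False)"

lemma deriv_nondiff:
  fixes h :: "real \<Rightarrow> real"
  assumes "\<not> (\<exists>D. DERIV h x :> D)"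
  shows "deriv h x = c0"
proof -
  have "(\<lambda>D. DERIV h x :> D) = (\<lambda>D. False)" using assms by auto
  then show ?thesis unfolding deriv_def c0_def by simp
qed

lemma dense_le_lemma:
  fixes \<phi> :: "real \<Rightarrow> real"
  assumes cont: "\<And>y. y \<noteq> 0 \<Longrightarrow> isCont \<phi> y"
    and d: "\<And>s::rat. s \<noteq> 0 \<Longrightarrow> \<bar>of_rat s\<bar> < d \<Longrightarrow> \<phi> (of_rat s) \<le> e"
    and y: "y \<noteq> 0" "\<bar>y\<bar> < d"
  shows "\<phi> y \<le> e"
proof (rule ccontr)
  assume "\<not> \<phi> y \<le> e"
  hence pos: "\<phi> y - e > 0" by simp
  from cont[OF y(1)] obtain \<delta> where \<delta>: "\<delta> > 0" "\<And>z. \<bar>z - y\<bar> < \<delta> \<Longrightarrow> \<bar>\<phi> z - \<phi> y\<bar> < \<phi> y - e"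
    using pos unfolding continuous_at_eps_delta dist_real_def by metis
  define m where "m = min \<delta> (min (d - \<bar>y\<bar>) \<bar>y\<bar>)"
  have m: "m > 0" using \<delta> y by (simp add: m_def)
  obtain r where r: "r \<in> \<rat>" "y < r" "r < y + m" using Rats_dense_in_real[of y "y+m"] m by auto
  then obtain s where s: "r = of_rat s" by (auto elim: Rats_cases)
  have "\<bar>r - y\<bar> < \<delta>" using r m_def by auto
  hence "\<phi> r > e" using \<delta>(2) by fastforce
  moreover have "r \<noteq> 0" using r y m_def by (cases "y > 0") auto
  moreover have "\<bar>r\<bar> < d"
  proof -
    have "m \<le> d - \<bar>y\<bar>" "m \<le> \<bar>y\<bar>" by (simp_all add: m_def)
    show ?thesis
    proof (cases "y > 0")
      case True then show ?thesis using r \<open>m \<le> d - \<bar>y\<bar>\<close> by auto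
    next
      case False then have "y < 0" using y by auto
      then show ?thesis using r \<open>m \<le> \<bar>y\<bar>\<close> y by auto
    qed
  qed
  ultimately show False using d[of s] s by fastforce
qed

lemma deriv_meas_UNIV:
  fixes h :: "real \<Rightarrow> real"
  assumes hc: "continuous_on UNIV h"
  shows "deriv h \<in> borel_measurable borel"
proof -
  have hm[measurable]: "h \<in> borel_measurable borel" using hc by (rule borel_measurable_continuous_onI)
  have hs[measurable]: "(\<lambda>x. h (x + c)) \<in> borel_measurable borel" for c
    using hc by (intro borel_measurable_continuous_onI continuous_on_compose2[OF hc]) (auto intro!: continuous_intros)
  define Q where "Q n x = (h (x + 1/Suc n) - h x) * Suc n" for n :: nat and x
  have Qm: "Q n \<in> borel_measurable borel" for n unfolding Q_def by measurable
  define L where "L x = lim (\<lambda>n. Q n x)" for x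
  have Lm[measurable]: "L \<in> borel_measurable borel" unfolding L_def by (intro borel_measurable_lim_metric Qm)
  define P where "P x \<longleftrightarrow> (\<forall>e::rat. e > 0 \<longrightarrow> (\<exists>d::rat. d > 0 \<and> (\<forall>s::rat. s \<noteq> 0 \<longrightarrow> \<bar>of_rat s\<bar> < (of_rat d::real) \<longrightarrow>
      \<bar>(h (x + of_rat s) - h x) / of_rat s - L x\<bar> \<le> (of_rat e::real))))" for x
  have phim: "(\<lambda>x. \<bar>(h (x + of_rat s) - h x) / of_rat s - L x\<bar>) \<in> borel_measurable borel" for s
    by (intro borel_measurable_abs borel_measurable_diff borel_measurable_divide hs hm Lm borel_measurable_const)
  have Pm[measurable]: "Measurable.pred borel P" unfolding P_def
  apply (rule pred_intros_countable(1))
  apply (rule pred_intros_imp')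
  apply (rule pred_intros_countable(2))
  apply (rule pred_intros_conj1')
  apply (rule pred_intros_countable(1))
  apply (rule pred_intros_imp')
  apply (rule pred_intros_imp')
  unfolding pred_def by (rule borel_measurable_le[OF phim borel_measurable_const])
  have eq: "deriv h x = (if P x then L x else c0)" for x
  proof (cases "\<exists>D. DERIV h x :> D")
    case True
    then obtain D where D: "DERIV h x :> D" by auto
    have lim0: "((\<lambda>s. (h (x + s) - h x) / s) \<longlongrightarrow> D) (at 0)"
      using D unfolding DERIV_def by simp
    have "(\<lambda>n. Q n x) \<longlonglongrightarrow> D"
    proof -
      have l1: "(\<lambda>n. 1 / real (Suc n)) \<longlonglongrightarrow> 0" using LIMSEQ_inverse_real_of_nat by (simp add: inverse_eq_divide)
      have "filterlim (\<lambda>n. 1 / real (Suc n)) (at_right 0) sequentially"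
        by (rule tendsto_imp_filterlim_at_right[OF l1]) simp
      hence l2: "filterlim (\<lambda>n. 1 / real (Suc n)) (at 0) sequentially"
        by (rule filterlim_mono) (auto simp: at_le)
      have eqQ: "(\<lambda>n. Q n x) = (\<lambda>n. (h (x + 1 / real (Suc n)) - h x) / (1 / real (Suc n)))"
        by (simp add: Q_def)
      show ?thesis unfolding eqQ by (rule filterlim_compose[OF lim0 l2])
    qed
    hence LD: "L x = D" unfolding L_def by (rule limI)
    have "P x" unfolding P_def
    proof (intro allI impI)
      fix e :: rat assume "e > 0"
      hence "(of_rat e :: real) > 0" by simp
      then obtain d where d: "d > 0" "\<And>s. s \<noteq> 0 \<Longrightarrow> norm (s - 0) < d \<Longrightarrow> norm ((h (x + s) - h x) / s - D) < of_rat e"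
        using lim0[unfolded LIM_eq] by metis
      obtain r where r: "r \<in> \<rat>" "0 < r" "r < d" using Rats_dense_in_real[of 0 d] d by auto
      then obtain d' where d': "r = of_rat d'" by (auto elim: Rats_cases)
      show "\<exists>d::rat. d > 0 \<and> (\<forall>s::rat. s \<noteq> 0 \<longrightarrow> \<bar>of_rat s\<bar> < (of_rat d::real) \<longrightarrow>
        \<bar>(h (x + of_rat s) - h x) / of_rat s - L x\<bar> \<le> (of_rat e::real))"
        using r d' d LD by (intro exI[of _ d']) (auto intro!: less_imp_le)
    qed
    then show ?thesis using LD D by (simp add: DERIV_imp_deriv)
  next
    case False
    have "\<not> P x"
    proof
      assume Px: "P x"
      have "((\<lambda>s. (h (x + s) - h x) / s) \<longlongrightarrow> L x) (at 0)"
        unfolding LIM_eq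
      proof (intro allI impI)
        fix r :: real assume "r > 0"
        then obtain e' where e': "e' \<in> \<rat>" "0 < e'" "e' < r" using Rats_dense_in_real[of 0 r] by auto
        then obtain e where e: "e' = of_rat e" by (auto elim: Rats_cases)
        hence "e > 0" using e' by simp
        then obtain d where d: "d > 0" "\<And>s::rat. s \<noteq> 0 \<Longrightarrow> \<bar>of_rat s\<bar> < (of_rat d::real) \<Longrightarrow>
            \<bar>(h (x + of_rat s) - h x) / of_rat s - L x\<bar> \<le> (of_rat e::real)"
          using Px unfolding P_def by blast
        have "\<bar>(h (x + y) - h x) / y - L x\<bar> \<le> of_rat e" if "y \<noteq> 0" "\<bar>y\<bar> < of_rat d" for y
        proof (rule dense_le_lemma[where \<phi> = "\<lambda>y. \<bar>(h (x + y) - h x) / y - L x\<bar>"])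
          show "isCont (\<lambda>y. \<bar>(h (x + y) - h x) / y - L x\<bar>) y" if "y \<noteq> 0" for y
          proof -
            have "isCont (\<lambda>y. h (x + y)) y"
              using hc by (intro continuous_on_interior[of UNIV] continuous_on_compose2[OF hc]) (auto intro!: continuous_intros)
            then show ?thesis using that by (intro continuous_intros) auto
          qed
        qed (use d that in auto)
        then show "\<exists>s>0. \<forall>y. y \<noteq> 0 \<and> norm (y - 0) < s \<longrightarrow> norm ((h (x + y) - h x) / y - L x) < r"
          using d e e' by (intro exI[of _ "of_rat d"]) fastforce
      qed
      hence "DERIV h x :> L x" unfolding DERIV_def by simp
      with False show False by auto
    qed
    then show ?thesis using deriv_nondiff[OF False] by simp
  qed
  have "deriv h = (\<lambda>x. if P x then L x else c0)" using eq by auto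
  then show ?thesis by simp
qed

lemma borel_to_lebesgue_on:
  assumes "f \<in> borel_measurable borel"
  shows "f \<in> borel_measurable (lebesgue_on S)"
  using measurable_comp[OF id_borel_measurable_lebesgue_on assms] by (simp add: o_def id_def)

lemma open_sets_lebesgue_on:
  fixes A :: "real set"
  assumes "open A" "A \<subseteq> S" "S \<in> sets lebesgue"
  shows "A \<in> sets (lebesgue_on S)"
  using assms by (simp add: sets_restrict_space_iff borel_open sets_completionI_sets)

lemma deriv_meas_U:
  fixes h :: "real \<Rightarrow> real"
  assumes hc: "continuous_on {0<..} h"
  shows "deriv h \<in> borel_measurable (lebesgue_on {0<..})"
proof (rule measurable_piecewise_restrict2[where A = "\<lambda>n. {1 / real (Suc n)<..}"])
  show "{1 / real (Suc n)<..} \<in> sets (lebesgue_on {0<..})" for n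
    by (rule open_sets_lebesgue_on) (auto simp: sets_completionI_sets borel_open)
  show "space (lebesgue_on {0<..}) = (\<Union>n. {1 / real (Suc n)<..})"
  proof (auto simp: space_restrict_space)
    fix x :: real assume "x > 0"
    then obtain n where "inverse (real (Suc n)) < x" using reals_Archimedean by blast
    then show "\<exists>n. 1 / (1 + real n) < x" by (auto simp: inverse_eq_divide)
  next
    fix x :: real and n assume "1 / (1 + real n) < x"
    moreover have "0 < 1 / (1 + real n)" by simp
    ultimately show "0 < x" by linarith
  qed
  fix n :: nat
  define b where "b = 1 / real (Suc n)"
  have b: "b > 0" by (simp add: b_def)
  define hn where "hn x = h (max x b)" for x
  have "continuous_on UNIV hn" unfolding hn_def
  proof (rule continuous_on_compose2[of "{b..}" h UNIV "\<lambda>x. max x b"])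
    have "{b..} \<subseteq> {0<..}" using b by auto
    then show "continuous_on {b..} h" by (rule continuous_on_subset[OF hc])
  qed (auto intro!: continuous_intros)
  hence m: "deriv hn \<in> borel_measurable (lebesgue_on {0<..})"
    by (intro borel_to_lebesgue_on deriv_meas_UNIV)
  have "deriv h x = deriv hn x" if "x \<in> {b<..}" for x
  proof (rule deriv_cong_ev)
    have "eventually (\<lambda>y. y \<in> {b<..}) (nhds x)" using that by (intro eventually_nhds_in_open) auto
    then show "eventually (\<lambda>y. h y = hn y) (nhds x)" by eventually_elim (auto simp: hn_def)
  qed simp
  then show "\<exists>g\<in>borel_measurable (lebesgue_on {0<..}). \<forall>x\<in>{1 / real (Suc n)<..}. deriv h x = g x"
    using m unfolding b_def by blast
qed

lemma abs_cont_cont: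
  assumes "loc_abs_cont H"
  shows "continuous_on {0<..} H"
proof (intro continuous_at_imp_continuous_on ballI)
  fix x :: real assume "x \<in> {0<..}"
  hence x: "x > 0" by simp
  have ac: "abs_cont_on (x/2) (2*x) H" using assms x unfolding loc_abs_cont_def by auto
  show "isCont H x" unfolding continuous_at_eps_delta
  proof (intro allI impI)
    fix e :: real assume "e > 0"
    then obtain \<delta> where \<delta>: "\<delta> > 0" and P: "\<forall>(n::nat) (xs::nat \<Rightarrow> real) ys.
        (\<forall>i<n. x/2 \<le> xs i \<and> xs i \<le> ys i \<and> ys i \<le> 2*x) \<and>
        (\<forall>i<n. \<forall>j<n. i \<noteq> j \<longrightarrow> ys i \<le> xs j \<or> ys j \<le> xs i) \<and>
        (\<Sum>i<n. ys i - xs i) < \<delta> \<longrightarrow> (\<Sum>i<n. \<bar>H (ys i) - H (xs i)\<bar>) < e"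
      using ac unfolding abs_cont_on_def by blast
    show "\<exists>d>0. \<forall>y. dist y x < d \<longrightarrow> dist (H y) (H x) < e"
    proof (intro exI[of _ "min \<delta> (x/2)"] conjI allI impI)
      show "min \<delta> (x/2) > 0" using \<delta> x by simp
      fix y assume y: "dist y x < min \<delta> (x/2)"
      hence y1: "\<bar>y - x\<bar> < \<delta>" "\<bar>y - x\<bar> < x/2" by (simp_all add: dist_real_def)
      show "dist (H y) (H x) < e"
      proof (cases "x \<le> y")
        case True
        have "(\<Sum>i<1::nat. \<bar>H ((\<lambda>_. y) i) - H ((\<lambda>_. x) i)\<bar>) < e"
        proof (rule P[rule_format])
          show "(\<forall>i<1::nat. x/2 \<le> (\<lambda>_. x) i \<and> (\<lambda>_. x) i \<le> (\<lambda>_. y) i \<and> (\<lambda>_. y) i \<le> 2*x) \<and>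
            (\<forall>i<1::nat. \<forall>j<1. i \<noteq> j \<longrightarrow> (\<lambda>_. y) i \<le> (\<lambda>_. x) j \<or> (\<lambda>_. y) j \<le> (\<lambda>_. x) i) \<and>
            (\<Sum>i<1::nat. (\<lambda>_. y) i - (\<lambda>_. x) i) < \<delta>"
            using True y1 x by simp
        qed
        then show ?thesis by (simp add: dist_real_def)
      next
        case False
        have "(\<Sum>i<1::nat. \<bar>H ((\<lambda>_. x) i) - H ((\<lambda>_. y) i)\<bar>) < e"
        proof (rule P[rule_format])
          show "(\<forall>i<1::nat. x/2 \<le> (\<lambda>_. y) i \<and> (\<lambda>_. y) i \<le> (\<lambda>_. x) i \<and> (\<lambda>_. x) i \<le> 2*x) \<and>
            (\<forall>i<1::nat. \<forall>j<1. i \<noteq> j \<longrightarrow> (\<lambda>_. x) i \<le> (\<lambda>_. y) j \<or> (\<lambda>_. x) j \<le> (\<lambda>_. y) i) \<and>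
            (\<Sum>i<1::nat. (\<lambda>_. x) i - (\<lambda>_. y) i) < \<delta>"
            using False y1 x by simp
        qed
        then show ?thesis by (simp add: dist_real_def abs_minus_commute)
      qed
    qed
  qed
qed

abbreviation MU :: "real measure" where "MU \<equiv> lebesgue_on {0::real<..}"

lemma U_sets[simp]: "{0<..} \<in> sets (lebesgue :: real measure)"
  by (simp add: sets_completionI_sets)

lemma set_int_MU: "set_lebesgue_integral lebesgue {0<..} (h::real\<Rightarrow>real) = integral\<^sup>L MU h"
  unfolding set_lebesgue_integral_def by (subst integral_restrict_space) auto

lemma nn_int_MU: "(\<integral>\<^sup>+ r\<in>{0<..}. h r \<partial>lebesgue) = nn_integral MU h"
  by (subst nn_integral_restrict_space) auto

lemma ident_MU[measurable]: "(\<lambda>x::real. x) \<in> borel_measurable (lebesgue_on S)"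
  using id_borel_measurable_lebesgue_on[of S] by (simp add: id_def)

lemma dens1_nonneg: "\<kappa> \<ge> 0 \<Longrightarrow> dens1 \<kappa> a f r \<ge> 0"
  unfolding dens1_def by (intro add_nonneg_nonneg mult_nonneg_nonneg) auto

lemma dens2_nonneg: "dens2 a g r \<ge> 0"
  unfolding dens2_def by (intro add_nonneg_nonneg mult_nonneg_nonneg) auto

lemma meas_cont: "continuous_on {0<..} h \<Longrightarrow> h \<in> borel_measurable MU"
  by (rule continuous_imp_measurable_on_sets_lebesgue) auto

lemma dens1_meas:
  assumes [measurable]: "a \<in> borel_measurable MU" "f \<in> borel_measurable MU"
    "deriv a \<in> borel_measurable MU" "deriv f \<in> borel_measurable MU"
  shows "dens1 \<kappa> a f \<in> borel_measurable MU"
proof -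
  have "dens1 \<kappa> a f = (\<lambda>r. 2 * (2 * (deriv a r)^2 + (a r ^ 2 - 1)^2 / r^2)
     + 1/2 * (r^2 * (deriv f r)^2 + 2 * a r ^ 2 * (sin (f r))^2)
     + 2 * \<kappa> * a r ^ 2 * (sin (f r))^2 *
         (2 * (deriv f r)^2 + a r ^ 2 * (sin (f r))^2 / r^2))" by (rule ext) (simp add: dens1_def)
  also have "\<dots> \<in> borel_measurable MU" by measurable
  finally show ?thesis .
qed

lemma dens2_meas:
  assumes [measurable]: "a \<in> borel_measurable MU" "g \<in> borel_measurable MU" "deriv g \<in> borel_measurable MU"
  shows "dens2 a g \<in> borel_measurable MU"
proof -
  have "dens2 a g = (\<lambda>r. r^2 * (deriv g r)^2 + 2 * a r ^ 2 * (g r)^2)" by (rule ext) (simp add: dens2_def)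
  also have "\<dots> \<in> borel_measurable MU" by measurable
  finally show ?thesis .
qed

lemma diff_shift: fixes g :: "real \<Rightarrow> real" shows "(\<exists>D. DERIV (\<lambda>r. g r - c) x :> D) \<longleftrightarrow> (\<exists>D. DERIV g x :> D)"
proof
  assume "\<exists>D. DERIV (\<lambda>r. g r - c) x :> D"
  then obtain D where "DERIV (\<lambda>r. g r - c) x :> D" by auto
  from DERIV_add[OF this DERIV_const[of c]] show "\<exists>D. DERIV g x :> D" by auto
next
  assume "\<exists>D. DERIV g x :> D"
  then obtain D where "DERIV g x :> D" by auto
  from DERIV_diff[OF this DERIV_const[of c]] show "\<exists>D. DERIV (\<lambda>r. g r - c) x :> D" by auto
qed

lemma deriv_shift: fixes g :: "real \<Rightarrow> real" shows "deriv (\<lambda>r. g r - c) x = deriv g x"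
proof (cases "\<exists>D. DERIV g x :> D")
  case True
  then obtain D where D: "DERIV g x :> D" by auto
  from DERIV_diff[OF this DERIV_const[of c]] have "DERIV (\<lambda>r. g r - c) x :> D" by simp
  then show ?thesis using D by (simp add: DERIV_imp_deriv)
next
  case False
  then have "\<not> (\<exists>D. DERIV (\<lambda>r. g r - c) x :> D)" using diff_shift[of g c x] by simp
  then have "deriv (\<lambda>r. g r - c) x = c0" by (rule deriv_nondiff)
  moreover have "deriv g x = c0" using False by (rule deriv_nondiff)
  ultimately show ?thesis by simp
qed

lemma diff_scale: fixes g :: "real \<Rightarrow> real" assumes c: "(c::real) \<noteq> 0" shows "(\<exists>D. DERIV (\<lambda>r. c * g r) x :> D) \<longleftrightarrow> (\<exists>D. DERIV g x :> D)"
proof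
  assume "\<exists>D. DERIV (\<lambda>r. c * g r) x :> D"
  then obtain D where "DERIV (\<lambda>r. c * g r) x :> D" by auto
  from DERIV_cmult[OF this, of "1/c"] c show "\<exists>D. DERIV g x :> D" by auto
next
  assume "\<exists>D. DERIV g x :> D"
  then obtain D where "DERIV g x :> D" by auto
  from DERIV_cmult[OF this, of c] show "\<exists>D. DERIV (\<lambda>r. c * g r) x :> D" by auto
qed

lemma deriv_scale: "(c::real) \<noteq> 0 \<Longrightarrow>
    deriv (\<lambda>r. c * g r) x = (if \<exists>D. DERIV g x :> D then c * deriv g x else deriv g x)"
proof (cases "\<exists>D. DERIV g x :> D")
  case True
  then obtain D where D: "DERIV g x :> D" by auto
  from DERIV_cmult[OF this, of c] have "DERIV (\<lambda>r. c * g r) x :> c * D" by simp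
  then show ?thesis using D True by (simp add: DERIV_imp_deriv)
next
  case False
  assume "c \<noteq> 0"
  then have "\<not> (\<exists>D. DERIV (\<lambda>r. c * g r) x :> D)" using False diff_scale[of c g x] by simp
  then have "deriv (\<lambda>r. c * g r) x = c0" by (rule deriv_nondiff)
  moreover have "deriv g x = c0" using False by (rule deriv_nondiff)
  ultimately show ?thesis using False by simp
qed

lemma deriv_scale_sq: fixes g :: "real \<Rightarrow> real" assumes c: "(c::real) \<noteq> 0" shows "(deriv (\<lambda>r. c * g r) x)^2 \<le> max 1 (c^2) * (deriv g x)^2"
proof -
  have "c^2 * (deriv g x)^2 \<le> max 1 (c^2) * (deriv g x)^2"
    by (intro mult_right_mono; simp)
  moreover have "(deriv g x)^2 \<le> max 1 (c^2) * (deriv g x)^2"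
    using mult_right_mono[of 1 "max 1 (c^2)" "(deriv g x)^2"] by simp
  ultimately show ?thesis using deriv_scale[OF c, of g x] by (auto simp: power_mult_distrib)
qed

lemma lac_shift: "loc_abs_cont g \<Longrightarrow> loc_abs_cont (\<lambda>r. g r - c)"
  unfolding loc_abs_cont_def abs_cont_on_def by simp

lemma lac_scale:
  assumes "loc_abs_cont g" "(c::real) \<noteq> 0"
  shows "loc_abs_cont (\<lambda>r. c * g r)"
  unfolding loc_abs_cont_def abs_cont_on_def
proof (intro allI impI)
  fix u v e :: real assume uv: "0 < u" "u \<le> v" and e: "e > 0"
  have "e / \<bar>c\<bar> > 0" using e assms(2) by simp
  then obtain \<delta> where \<delta>: "\<delta> > 0" "\<forall>(n::nat) (x::nat \<Rightarrow> real) y.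
        (\<forall>i<n. u \<le> x i \<and> x i \<le> y i \<and> y i \<le> v) \<and>
        (\<forall>i<n. \<forall>j<n. i \<noteq> j \<longrightarrow> y i \<le> x j \<or> y j \<le> x i) \<and>
        (\<Sum>i<n. y i - x i) < \<delta> \<longrightarrow> (\<Sum>i<n. \<bar>g (y i) - g (x i)\<bar>) < e / \<bar>c\<bar>"
    using assms(1) uv unfolding loc_abs_cont_def abs_cont_on_def by blast
  show "\<exists>\<delta>>0. \<forall>(n::nat) (x::nat \<Rightarrow> real) y.
        (\<forall>i<n. u \<le> x i \<and> x i \<le> y i \<and> y i \<le> v) \<and>
        (\<forall>i<n. \<forall>j<n. i \<noteq> j \<longrightarrow> y i \<le> x j \<or> y j \<le> x i) \<and>
        (\<Sum>i<n. y i - x i) < \<delta> \<longrightarrow> (\<Sum>i<n. \<bar>c * g (y i) - c * g (x i)\<bar>) < e"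
  proof (intro exI[of _ \<delta>] conjI allI impI)
    fix n :: nat and x y :: "nat \<Rightarrow> real"
    assume H: "(\<forall>i<n. u \<le> x i \<and> x i \<le> y i \<and> y i \<le> v) \<and>
        (\<forall>i<n. \<forall>j<n. i \<noteq> j \<longrightarrow> y i \<le> x j \<or> y j \<le> x i) \<and> (\<Sum>i<n. y i - x i) < \<delta>"
    have "(\<Sum>i<n. \<bar>g (y i) - g (x i)\<bar>) < e / \<bar>c\<bar>" using \<delta>(2) H by blast
    hence "\<bar>c\<bar> * (\<Sum>i<n. \<bar>g (y i) - g (x i)\<bar>) < e" using assms(2) by (simp add: field_simps)
    moreover have "(\<Sum>i<n. \<bar>c * g (y i) - c * g (x i)\<bar>) = \<bar>c\<bar> * (\<Sum>i<n. \<bar>g (y i) - g (x i)\<bar>)"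
      by (simp add: sum_distrib_left abs_mult right_diff_distrib[symmetric])
    ultimately show "(\<Sum>i<n. \<bar>c * g (y i) - c * g (x i)\<bar>) < e" by simp
  qed (use \<delta> in auto)
qed

locale trip =
  fixes \<kappa> \<omega> q :: real and a f g :: "real \<Rightarrow> real"
  assumes kpos: "\<kappa> > 0" and qpos: "q > 0" and C: "(a, f, g) \<in> constrained \<kappa> \<omega> q"
begin

lemma adm: "(a, f, g) \<in> admissible \<kappa> \<omega> q" using C unfolding constrained_def by auto

lemma contU: "continuous_on {0<..} a" "continuous_on {0<..} f" "continuous_on {0<..} g"
  using adm unfolding admissible_def by (auto intro: continuous_on_subset)

lemma lac: "loc_abs_cont g" using adm unfolding admissible_def by auto
lemma glim: "(g \<longlongrightarrow> q) at_top" using adm unfolding admissible_def by auto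
lemma gcont0: "continuous_on {0..} g" "continuous_on {0..} a" using adm unfolding admissible_def by auto

lemma meas[measurable]: "a \<in> borel_measurable MU" "f \<in> borel_measurable MU" "g \<in> borel_measurable MU"
  "deriv a \<in> borel_measurable MU" "deriv f \<in> borel_measurable MU" "deriv g \<in> borel_measurable MU"
  using contU by (auto intro: meas_cont deriv_meas_U)

lemma d1m[measurable]: "dens1 \<kappa> a f \<in> borel_measurable MU" by (rule dens1_meas) (use meas in auto)
lemma d2m[measurable]: "dens2 a g \<in> borel_measurable MU" by (rule dens2_meas) (use meas in auto)

lemma energy_fin: "nn_integral MU (\<lambda>r. ennreal (dens1 \<kappa> a f r + dens2 a g r)) < \<infinity>"
  using adm unfolding admissible_def energy_def nn_int_MU by auto

lemma int_sum: "integrable MU (\<lambda>r. dens1 \<kappa> a f r + dens2 a g r)"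
  by (rule integrableI_nonneg) (use energy_fin kpos dens1_nonneg dens2_nonneg in \<open>auto intro!: add_nonneg_nonneg\<close>)

lemma int_d1: "integrable MU (dens1 \<kappa> a f)"
  by (rule Bochner_Integration.integrable_bound[OF int_sum d1m]) (use kpos dens1_nonneg dens2_nonneg in auto)

lemma int_d2: "integrable MU (dens2 a g)"
  by (rule Bochner_Integration.integrable_bound[OF int_sum d2m]) (use kpos dens1_nonneg dens2_nonneg in auto)

lemma Lfun_eq: "Lfun \<kappa> a f g = integral\<^sup>L MU (dens1 \<kappa> a f) - integral\<^sup>L MU (dens2 a g)"
  unfolding Lfun_def set_int_MU using int_d1 int_d2 by simp

lemma constr:
  assumes "loc_abs_cont G" "(G \<longlongrightarrow> 0) at_top" "energy2 a G < \<infinity>"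
  shows "integral\<^sup>L MU (\<lambda>r. r^2 * deriv g r * deriv G r + 2 * a r ^ 2 * g r * G r) = 0"
  using C assms unfolding constrained_def set_int_MU by auto

lemma int_a2: "integrable MU (\<lambda>r. (a r)^2)"
proof -
  have "eventually (\<lambda>r. g r > q/2) at_top" using glim qpos by (intro order_tendstoD(1)) auto
  then obtain N where N: "\<And>r. r \<ge> N \<Longrightarrow> g r > q/2" unfolding eventually_at_top_linorder by blast
  define R where "R = max N 1"
  have R: "R > 0" "\<And>r. r \<ge> R \<Longrightarrow> g r > q/2" using N by (auto simp: R_def)
  have "compact (a ` {0..R})"
    by (rule compact_continuous_image[OF continuous_on_subset[OF gcont0(2)]]) auto
  hence "bounded (a ` {0..R})" by (rule compact_imp_bounded)
  then obtain B where B0: "\<forall>x\<in>a ` {0..R}. norm x \<le> B" unfolding bounded_iff by blast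
  have B: "\<bar>a r\<bar> \<le> B" if "r \<in> {0..R}" for r using B0 that by auto
  define \<phi> where "\<phi> r = B^2 * indicator {0<..R} r + 2/q^2 * dens2 a g r" for r
  have ind: "integrable MU (indicator {0<..R} :: real \<Rightarrow> real)"
  proof (rule integrable_real_indicator)
    show "{0<..R} \<in> sets MU" by (auto simp add: sets_restrict_space_iff sets_completionI_sets)
    have "emeasure MU {0<..R} = emeasure lebesgue {0<..R}"
      by (rule emeasure_restrict_space) auto
    also have "\<dots> = emeasure lborel {0<..R}" by (simp add: emeasure_completion)
    also have "\<dots> = ennreal R" using R by simp
    finally show "emeasure MU {0<..R} < \<infinity>" by simp
  qed
  have i: "integrable MU \<phi>" unfolding \<phi>_def using ind int_d2 by auto
  have ae: "AE r in MU. norm ((a r)^2) \<le> norm (\<phi> r)"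
  proof (rule AE_I2)
    fix r assume "r \<in> space MU"
    hence r: "r > 0" by simp
    have d2: "0 \<le> dens2 a g r" by (rule dens2_nonneg)
    have "(a r)^2 \<le> \<phi> r"
    proof (cases "r \<le> R")
      case True
      have "\<bar>a r\<bar> \<le> B" using B True r by auto
      hence "(a r)^2 \<le> B^2" by (metis abs_ge_zero abs_le_square_iff abs_of_nonneg order_trans)
      moreover have "0 \<le> 2 * dens2 a g r / q^2" using d2 qpos by simp
      ultimately show ?thesis using True r by (simp add: \<phi>_def)
    next
      case False
      hence gq: "g r > q/2" using R by auto
      have "(q/2)^2 \<le> (g r)^2" using gq qpos by (intro power_mono) auto
      hence "q^2 \<le> 4 * (g r)^2" by (simp add: power_divide)
      hence "(a r)^2 * q^2 \<le> (a r)^2 * (4 * (g r)^2)" by (intro mult_left_mono) auto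
      hence "(a r)^2 \<le> (a r)^2 * (4 * (g r)^2) / q^2" using qpos by (simp add: pos_le_divide_eq)
      also have "\<dots> = 2/q^2 * (2 * (a r)^2 * (g r)^2)" by simp
      also have "\<dots> \<le> 2/q^2 * dens2 a g r" using qpos
        by (intro mult_left_mono) (auto simp: dens2_def)
      finally show ?thesis using False by (simp add: \<phi>_def)
    qed
    moreover have "0 \<le> \<phi> r" using d2 qpos by (simp add: \<phi>_def)
    ultimately show "norm ((a r)^2) \<le> norm (\<phi> r)" by simp
  qed
  show ?thesis by (rule Bochner_Integration.integrable_bound[OF i _ ae]) measurable
qed

lemma int_a2g: "integrable MU (\<lambda>r. (a r)^2 * g r)"
proof (rule Bochner_Integration.integrable_bound)
  show "integrable MU (\<lambda>r. (a r)^2 + dens2 a g r)" using int_a2 int_d2 by auto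
  show "(\<lambda>r. (a r)^2 * g r) \<in> borel_measurable MU" by measurable
  show "AE r in MU. norm ((a r)^2 * g r) \<le> norm ((a r)^2 + dens2 a g r)"
  proof (rule AE_I2)
    fix r
    have g1: "\<bar>g r\<bar> \<le> 1 + 2 * (g r)^2"
    proof -
      have "0 \<le> (\<bar>g r\<bar> - 1)^2" by simp
      also have "(\<bar>g r\<bar> - 1)^2 = (g r)^2 - 2 * \<bar>g r\<bar> + 1" by (simp add: power2_diff)
      finally show ?thesis using zero_le_power2[of "g r"] by linarith
    qed
    have "\<bar>(a r)^2 * g r\<bar> = (a r)^2 * \<bar>g r\<bar>" by (simp add: abs_mult)
    also have "\<dots> \<le> (a r)^2 * (1 + 2 * (g r)^2)" by (intro mult_left_mono g1) auto
    also have "\<dots> \<le> (a r)^2 + dens2 a g r" by (simp add: dens2_def algebra_simps)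
    finally show "norm ((a r)^2 * g r) \<le> norm ((a r)^2 + dens2 a g r)" using dens2_nonneg[of a g r] by simp
  qed
qed

lemma fin_of_int: "integrable MU h \<Longrightarrow> (\<And>r. 0 \<le> h r) \<Longrightarrow> nn_integral MU (\<lambda>r. ennreal (h r)) < \<infinity>"
  by (subst nn_integral_eq_integral) auto

lemma key: "integral\<^sup>L MU (dens2 a g) = q * charge a g"
proof -
  define G1 where "G1 r = g r - q" for r
  have eqd: "dens2 a G1 r = dens2 a g r - 4 * q * ((a r)^2 * g r) + 2 * q^2 * (a r)^2" for r
    unfolding dens2_def G1_def deriv_shift by (simp add: power2_eq_square algebra_simps)
  have "integrable MU (dens2 a G1)" unfolding eqd using int_d2 int_a2g int_a2 by auto
  hence e2: "energy2 a G1 < \<infinity>" unfolding energy2_def nn_int_MU by (rule fin_of_int) (rule dens2_nonneg)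
  moreover have l2: "loc_abs_cont G1" unfolding G1_def by (rule lac_shift[OF lac])
  moreover have t2: "(G1 \<longlongrightarrow> 0) at_top" unfolding G1_def using tendsto_diff[OF glim tendsto_const[of q]] by simp
  have c: "integral\<^sup>L MU (\<lambda>r. r^2 * deriv g r * deriv G1 r + 2 * a r ^ 2 * g r * G1 r) = 0"
    by (rule constr[OF l2 t2 e2])
  have "(\<lambda>r. r^2 * deriv g r * deriv G1 r + 2 * a r ^ 2 * g r * G1 r) = (\<lambda>r. dens2 a g r - 2 * q * ((a r)^2 * g r))"
    unfolding dens2_def G1_def deriv_shift by (rule ext) (simp add: power2_eq_square algebra_simps)
  with c have "integral\<^sup>L MU (dens2 a g) - 2 * q * integral\<^sup>L MU (\<lambda>r. (a r)^2 * g r) = 0"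
    using int_d2 int_a2g by simp
  moreover have "charge a g = 2 * integral\<^sup>L MU (\<lambda>r. (a r)^2 * g r)" unfolding charge_def set_int_MU ..
  ultimately show ?thesis by simp
qed

end

lemma two_abs_le: "2 * \<bar>x * y\<bar> \<le> x^2 + (y::real)^2"
proof -
  have "0 \<le> (\<bar>x\<bar> - \<bar>y\<bar>)^2" by simp
  also have "\<dots> = x^2 + y^2 - 2 * \<bar>x * y\<bar>" by (simp add: power2_diff abs_mult)
  finally show ?thesis by simp
qed

lemma cross_bound: "\<bar>r^2 * deriv u r * deriv v r + 2 * (a r)^2 * u r * v r\<bar> \<le> dens2 a u r + dens2 a v r"
proof -
  have 1: "2 * \<bar>(r * deriv u r) * (r * deriv v r)\<bar> \<le> (r * deriv u r)^2 + (r * deriv v r)^2" by (rule two_abs_le)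
  have 2: "2 * \<bar>u r * v r\<bar> \<le> (u r)^2 + (v r)^2" by (rule two_abs_le)
  have 3: "(a r)^2 * (2 * \<bar>u r * v r\<bar>) \<le> (a r)^2 * ((u r)^2 + (v r)^2)" by (rule mult_left_mono[OF 2]) simp
  have "\<bar>r^2 * deriv u r * deriv v r + 2 * (a r)^2 * u r * v r\<bar>
      \<le> \<bar>(r * deriv u r) * (r * deriv v r)\<bar> + (a r)^2 * (2 * \<bar>u r * v r\<bar>)"
    by (rule order_trans[OF abs_triangle_ineq]) (simp add: abs_mult power2_eq_square algebra_simps)
  also have "\<dots> \<le> dens2 a u r + dens2 a v r"
  proof -
    have e1: "(r * deriv u r)^2 = r^2 * (deriv u r)^2" "(r * deriv v r)^2 = r^2 * (deriv v r)^2"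
      by (simp_all add: power_mult_distrib)
    have n: "0 \<le> r^2 * (deriv u r)^2" "0 \<le> r^2 * (deriv v r)^2" "0 \<le> (a r)^2 * (u r)^2" "0 \<le> (a r)^2 * (v r)^2"
      by simp_all
    have d: "dens2 a u r = r^2 * (deriv u r)^2 + 2 * ((a r)^2 * (u r)^2)"
      "dens2 a v r = r^2 * (deriv v r)^2 + 2 * ((a r)^2 * (v r)^2)" by (simp_all add: dens2_def)
    have 4: "(a r)^2 * ((u r)^2 + (v r)^2) = (a r)^2 * (u r)^2 + (a r)^2 * (v r)^2" by (simp add: algebra_simps)
    show ?thesis using 1 3 e1 n d 4 by linarith
  qed
  finally show ?thesis .
qed

context trip begin

lemma G1_facts:
  shows "loc_abs_cont (\<lambda>r. g r - q)" "((\<lambda>r. g r - q) \<longlongrightarrow> 0) at_top"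
    "integrable MU (dens2 a (\<lambda>r. g r - q))" "dens2 a (\<lambda>r. g r - q) \<in> borel_measurable MU"
proof -
  have eqd: "dens2 a (\<lambda>r. g r - q) r = dens2 a g r - 4 * q * ((a r)^2 * g r) + 2 * q^2 * (a r)^2" for r
    unfolding dens2_def deriv_shift by (simp add: power2_eq_square algebra_simps)
  show "integrable MU (dens2 a (\<lambda>r. g r - q))" unfolding eqd using int_d2 int_a2g int_a2 by auto
  then show "dens2 a (\<lambda>r. g r - q) \<in> borel_measurable MU" by auto
  show "loc_abs_cont (\<lambda>r. g r - q)" by (rule lac_shift[OF lac])
  show "((\<lambda>r. g r - q) \<longlongrightarrow> 0) at_top" using tendsto_diff[OF glim tendsto_const[of q]] by simp
qed

lemma scaled_facts:
  assumes c: "(c::real) \<noteq> 0" and lG: "loc_abs_cont G" and iG: "integrable MU (dens2 a G)"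
  shows "integrable MU (dens2 a (\<lambda>r. c * G r))" "loc_abs_cont (\<lambda>r. c * G r)"
proof -
  have cG: "continuous_on {0<..} (\<lambda>r. c * G r)" using abs_cont_cont[OF lG] by (intro continuous_intros)
  have cG0: "continuous_on {0<..} G" using abs_cont_cont[OF lG] .
  have m: "dens2 a (\<lambda>r. c * G r) \<in> borel_measurable MU"
    by (rule dens2_meas) (use meas cG meas_cont deriv_meas_U in auto)
  show "integrable MU (dens2 a (\<lambda>r. c * G r))"
  proof (rule Bochner_Integration.integrable_bound[OF _ m])
    show "integrable MU (\<lambda>r. max 1 (c^2) * dens2 a G r)" using iG by auto
    show "AE r in MU. norm (dens2 a (\<lambda>r. c * G r) r) \<le> norm (max 1 (c^2) * dens2 a G r)"
    proof (rule AE_I2)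
      fix r
      have "dens2 a (\<lambda>r. c * G r) r \<le> max 1 (c^2) * dens2 a G r"
      proof -
        have "r^2 * (deriv (\<lambda>r. c * G r) r)^2 \<le> r^2 * (max 1 (c^2) * (deriv G r)^2)"
          by (intro mult_left_mono deriv_scale_sq c) simp
        moreover have "2 * (a r)^2 * (c * G r)^2 \<le> max 1 (c^2) * (2 * (a r)^2 * (G r)^2)"
          by (simp add: power_mult_distrib mult_right_mono mult.left_commute)
        ultimately show ?thesis unfolding dens2_def by (simp add: algebra_simps)
      qed
      then show "norm (dens2 a (\<lambda>r. c * G r) r) \<le> norm (max 1 (c^2) * dens2 a G r)"
        using dens2_nonneg[of a "\<lambda>r. c * G r" r] dens2_nonneg[of a G r] by simp
    qed
  qed
  show "loc_abs_cont (\<lambda>r. c * G r)" by (rule lac_scale[OF lG c])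
qed

end

context trip begin

lemma integrand_int:
  assumes lG: "loc_abs_cont G" and iG: "integrable MU (dens2 a G)"
  shows "integrable MU (\<lambda>r. r^2 * deriv g r * deriv G r + 2 * a r ^ 2 * g r * G r)"
proof (rule Bochner_Integration.integrable_bound)
  show "integrable MU (\<lambda>r. dens2 a g r + dens2 a G r)" using int_d2 iG by auto
  have cG0: "continuous_on {0<..} G" using abs_cont_cont[OF lG] .
  have [measurable]: "G \<in> borel_measurable MU" "deriv G \<in> borel_measurable MU"
    using cG0 meas_cont deriv_meas_U by auto
  show "(\<lambda>r. r^2 * deriv g r * deriv G r + 2 * a r ^ 2 * g r * G r) \<in> borel_measurable MU" by measurable
  show "AE r in MU. norm (r^2 * deriv g r * deriv G r + 2 * a r ^ 2 * g r * G r) \<le> norm (dens2 a g r + dens2 a G r)"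
    using cross_bound[of r g G a for r] dens2_nonneg[of a g] dens2_nonneg[of a G]
    by (intro AE_I2) (simp add: add_nonneg_nonneg)
qed

lemma en2_fin: assumes "integrable MU (dens2 a G)" shows "energy2 a G < \<infinity>"
  unfolding energy2_def nn_int_MU by (intro fin_of_int assms dens2_nonneg)

lemma ae_diff:
  assumes c0: "c0 \<noteq> 0"
  shows "AE r in MU. \<exists>D. DERIV g r :> D"
proof -
  define G1 where "G1 r = g r - q" for r
  define G2 where "G2 r = 2 * G1 r" for r
  have l1: "loc_abs_cont G1" and t1: "(G1 \<longlongrightarrow> 0) at_top" and i1: "integrable MU (dens2 a G1)"
    using G1_facts unfolding G1_def[abs_def] by auto
  have i2: "integrable MU (dens2 a G2)" and l2: "loc_abs_cont G2"
    using scaled_facts[of 2 G1] l1 i1 unfolding G2_def[abs_def] by auto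
  have t2: "(G2 \<longlongrightarrow> 0) at_top" unfolding G2_def using tendsto_mult[OF tendsto_const[of 2] t1] by simp
  let ?I = "\<lambda>G r. r^2 * deriv g r * deriv G r + 2 * a r ^ 2 * g r * G r"
  have I1: "integral\<^sup>L MU (?I G1) = 0" by (rule constr[OF l1 t1 en2_fin[OF i1]])
  have I2: "integral\<^sup>L MU (?I G2) = 0" by (rule constr[OF l2 t2 en2_fin[OF i2]])
  have ii1: "integrable MU (?I G1)" by (rule integrand_int[OF l1 i1])
  have ii2: "integrable MU (?I G2)" by (rule integrand_int[OF l2 i2])
  define \<psi> where "\<psi> r = (if \<exists>D. DERIV g r :> D then 0 else r^2 * c0^2)" for r
  have psi: "2 * ?I G1 r - ?I G2 r = \<psi> r" for r
  proof -
    have dG1: "deriv G1 r = deriv g r" unfolding G1_def[abs_def] by (rule deriv_shift)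
    have dfe: "(\<exists>D. DERIV G1 r :> D) \<longleftrightarrow> (\<exists>D. DERIV g r :> D)" unfolding G1_def[abs_def] by (rule diff_shift)
    have dG2: "deriv G2 r = (if \<exists>D. DERIV g r :> D then 2 * deriv g r else deriv g r)"
      unfolding G2_def[abs_def] using deriv_scale[of 2 G1 r] dfe dG1 by simp
    show ?thesis
    proof (cases "\<exists>D. DERIV g r :> D")
      case True
      then show ?thesis using dG2 dG1 by (simp add: \<psi>_def G2_def algebra_simps)
    next
      case False
      then have "deriv g r = c0" by (rule deriv_nondiff)
      then show ?thesis using dG2 dG1 False by (simp add: \<psi>_def G2_def algebra_simps power2_eq_square)
    qed
  qed
  have ipsi: "integrable MU \<psi>"
    using Bochner_Integration.integrable_diff[OF integrable_mult_right[OF ii1, of 2] ii2] unfolding psi .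
  have "integral\<^sup>L MU \<psi> = integral\<^sup>L MU (\<lambda>r. 2 * ?I G1 r) - integral\<^sup>L MU (?I G2)"
    unfolding psi[symmetric] by (rule Bochner_Integration.integral_diff[OF integrable_mult_right[OF ii1] ii2])
  also have "integral\<^sup>L MU (\<lambda>r. 2 * ?I G1 r) = 2 * integral\<^sup>L MU (?I G1)" by (rule integral_mult_right_zero)
  finally have "integral\<^sup>L MU \<psi> = 0" using I1 I2 by simp
  moreover have "AE r in MU. 0 \<le> \<psi> r" by (intro AE_I2) (simp add: \<psi>_def)
  ultimately have "AE r in MU. \<psi> r = 0" using integral_nonneg_eq_0_iff_AE[OF ipsi] by simp
  then show ?thesis
  proof (rule AE_mp[OF _ AE_I2], intro impI)
    fix r assume "r \<in> space MU" "\<psi> r = 0"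
    then show "\<exists>D. DERIV g r :> D" using c0 by (auto simp: \<psi>_def split: if_splits)
  qed
qed

lemma ae_scale:
  assumes c: "(c::real) \<noteq> 0"
  shows "AE r in MU. deriv (\<lambda>r. c * g r) r = c * deriv g r"
proof (cases "c0 = 0")
  case True
  show ?thesis
  proof (rule AE_I2)
    fix r
    show "deriv (\<lambda>r. c * g r) r = c * deriv g r"
    proof (cases "\<exists>D. DERIV g r :> D")
      case True then show ?thesis using deriv_scale[OF c, of g r] by simp
    next
      case False
      then have "deriv g r = c0" by (rule deriv_nondiff)
      then show ?thesis using deriv_scale[OF c, of g r] False \<open>c0 = 0\<close> by simp
    qed
  qed
next
  case False
  from ae_diff[OF False] show ?thesis
    by (rule AE_mp[OF _ AE_I2]) (use deriv_scale[OF c, of g] in auto)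
qed

end

context trip begin

lemma cg_meas:
  assumes "c \<noteq> 0"
  shows "(\<lambda>r. c * g r) \<in> borel_measurable MU" "deriv (\<lambda>r. c * g r) \<in> borel_measurable MU"
    "integrable MU (dens2 a (\<lambda>r. c * g r))"
proof -
  have "continuous_on {0<..} (\<lambda>r. c * g r)" using contU(3) by (intro continuous_intros)
  then show "(\<lambda>r. c * g r) \<in> borel_measurable MU" "deriv (\<lambda>r. c * g r) \<in> borel_measurable MU"
    by (auto intro: meas_cont deriv_meas_U)
  show "integrable MU (dens2 a (\<lambda>r. c * g r))" using scaled_facts[OF assms lac int_d2] by simp
qed

lemma d2_scaled: assumes c: "c \<noteq> 0"
  shows "integral\<^sup>L MU (dens2 a (\<lambda>r. c * g r)) = c^2 * integral\<^sup>L MU (dens2 a g)"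
proof -
  have [measurable]: "(\<lambda>r. c * g r) \<in> borel_measurable MU" "deriv (\<lambda>r. c * g r) \<in> borel_measurable MU"
    using cg_meas[OF c] by auto
  have "integral\<^sup>L MU (dens2 a (\<lambda>r. c * g r)) = integral\<^sup>L MU (\<lambda>r. c^2 * dens2 a g r)"
  proof (rule integral_cong_AE)
    show "dens2 a (\<lambda>r. c * g r) \<in> borel_measurable MU" by (rule dens2_meas) measurable
    show "(\<lambda>r. c^2 * dens2 a g r) \<in> borel_measurable MU" by measurable
    show "AE r in MU. dens2 a (\<lambda>r. c * g r) r = c^2 * dens2 a g r"
      using ae_scale[OF c] by (rule AE_mp[OF _ AE_I2]) (auto simp: dens2_def power_mult_distrib algebra_simps)
  qed
  then show ?thesis by simp
qed

lemma Lfun_scaled: assumes c: "c \<noteq> 0"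
  shows "Lfun \<kappa> a f (\<lambda>r. c * g r) = integral\<^sup>L MU (dens1 \<kappa> a f) - c^2 * integral\<^sup>L MU (dens2 a g)"
  unfolding Lfun_def set_int_MU
  using Bochner_Integration.integral_diff[OF int_d1 cg_meas(3)[OF c]] d2_scaled[OF c] by simp

lemma scaled_in:
  assumes c: "c > 0"
  shows "(a, f, \<lambda>r. c * g r) \<in> constrained \<kappa> \<omega> (c * q)"
proof -
  have c0: "c \<noteq> 0" using c by simp
  have [measurable]: "(\<lambda>r. c * g r) \<in> borel_measurable MU" "deriv (\<lambda>r. c * g r) \<in> borel_measurable MU"
    using cg_meas[OF c0] by auto
  have en: "energy \<kappa> a f (\<lambda>r. c * g r) < \<infinity>"
    unfolding energy_def nn_int_MU
    by (intro fin_of_int add_nonneg_nonneg dens1_nonneg dens2_nonneg Bochner_Integration.integrable_add int_d1 cg_meas(3)[OF c0])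
      (use kpos in auto)
  have "(a, f, \<lambda>r. c * g r) \<in> admissible \<kappa> \<omega> (c * q)"
    using adm en lac_scale[OF lac c0] tendsto_mult[OF tendsto_const[of c] glim]
    unfolding admissible_def by (auto intro!: continuous_intros)
  moreover have "integral\<^sup>L MU (\<lambda>r. r^2 * deriv (\<lambda>r. c * g r) r * deriv G r + 2 * a r ^ 2 * (c * g r) * G r) = 0"
    if lG: "loc_abs_cont G" and tG: "(G \<longlongrightarrow> 0) at_top" and eG: "energy2 a G < \<infinity>" for G
  proof -
    have cG0: "continuous_on {0<..} G" using abs_cont_cont[OF lG] .
    have [measurable]: "G \<in> borel_measurable MU" "deriv G \<in> borel_measurable MU"
      using cG0 meas_cont deriv_meas_U by auto
    have "integral\<^sup>L MU (\<lambda>r. r^2 * deriv (\<lambda>r. c * g r) r * deriv G r + 2 * a r ^ 2 * (c * g r) * G r)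
        = integral\<^sup>L MU (\<lambda>r. c * (r^2 * deriv g r * deriv G r + 2 * a r ^ 2 * g r * G r))"
    proof (rule integral_cong_AE)
      show "AE r in MU. r^2 * deriv (\<lambda>r. c * g r) r * deriv G r + 2 * a r ^ 2 * (c * g r) * G r
          = c * (r^2 * deriv g r * deriv G r + 2 * a r ^ 2 * g r * G r)"
        using ae_scale[OF c0] by (rule AE_mp[OF _ AE_I2]) (auto simp: algebra_simps)
    qed measurable
    also have "\<dots> = c * integral\<^sup>L MU (\<lambda>r. r^2 * deriv g r * deriv G r + 2 * a r ^ 2 * g r * G r)"
      by (rule integral_mult_right_zero)
    also have "\<dots> = 0" using constr[OF lG tG eG] by simp
    finally show ?thesis .
  qed
  ultimately show ?thesis unfolding constrained_def set_int_MU by auto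
qed

end

theorem lemma5p3:
  fixes \<kappa> \<omega> q0 :: real
    and a f g :: "real \<Rightarrow> real \<Rightarrow> real"
  assumes "\<kappa> > 0"
    and "pi / 2 < \<omega>" and "\<omega> < pi"
    and "0 < q0" and "q0 < min (sin \<omega> / sqrt 2) (sqrt 2 * (1 - \<omega> / pi))"
    and "\<And>q. 0 < q \<Longrightarrow> q \<le> q0 \<Longrightarrow> (a q, f q, g q) \<in> constrained \<kappa> \<omega> q"
    and "\<And>q r. 0 < q \<Longrightarrow> q \<le> q0 \<Longrightarrow> 0 \<le> r \<Longrightarrow> 0 \<le> f q r \<and> f q r \<le> pi / 2"
    and "\<And>q a' f' g'. 0 < q \<Longrightarrow> q \<le> q0 \<Longrightarrow> (a', f', g') \<in> constrained \<kappa> \<omega> q \<Longrightarrow>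
           Lfun \<kappa> (a q) (f q) (g q) \<le> Lfun \<kappa> a' f' g'"
  shows "((\<lambda>q. charge (a q) (g q)) \<longlongrightarrow> 0) (at_right 0)"
proof -
  have T: "trip \<kappa> \<omega> q (a q) (f q) (g q)" if "0 < q" "q \<le> q0" for q
    using assms(1,6) that by unfold_locales auto
  define D1 where "D1 q = integral\<^sup>L MU (dens1 \<kappa> (a q) (f q))" for q
  define D2 where "D2 q = integral\<^sup>L MU (dens2 (a q) (g q))" for q
  have L: "Lfun \<kappa> (a q) (f q) (g q) = D1 q - D2 q" if "0 < q" "q \<le> q0" for q
    using trip.Lfun_eq[OF T[OF that]] by (simp add: D1_def D2_def)
  have K: "D2 q = q * charge (a q) (g q)" if "0 < q" "q \<le> q0" for q
    using trip.key[OF T[OF that]] by (simp add: D2_def)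
  have P: "D2 q \<ge> 0" for q unfolding D2_def by (intro integral_nonneg_AE AE_I2 dens2_nonneg)
  have cmp: "D1 q' - D2 q' \<le> D1 q - (q'/q)^2 * D2 q" if "0 < q" "q \<le> q0" "0 < q'" "q' \<le> q0" for q q'
  proof -
    have "(a q, f q, \<lambda>r. (q'/q) * g q r) \<in> constrained \<kappa> \<omega> ((q'/q) * q)"
      using trip.scaled_in[OF T[OF that(1,2)], of "q'/q"] that by simp
    hence "(a q, f q, \<lambda>r. (q'/q) * g q r) \<in> constrained \<kappa> \<omega> q'" using that by simp
    from assms(8)[OF that(3,4) this] have "Lfun \<kappa> (a q') (f q') (g q') \<le> Lfun \<kappa> (a q) (f q) (\<lambda>r. (q'/q) * g q r)" .
    also have "\<dots> = D1 q - (q'/q)^2 * D2 q"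
      using trip.Lfun_scaled[OF T[OF that(1,2)], of "q'/q"] that by (simp add: D1_def D2_def)
    finally show ?thesis using L[OF that(3,4)] by simp
  qed
  define h where "h q = D2 q / q^2" for q
  have mono: "h q \<le> h q0" if "0 < q" "q \<le> q0" for q
  proof (cases "q = q0")
    case False
    hence lt: "q < q0" using that by simp
    have A: "D1 q - D2 q \<le> D1 q0 - (q/q0)^2 * D2 q0" by (rule cmp) (use that assms(4) in auto)
    have B: "D1 q0 - D2 q0 \<le> D1 q - (q0/q)^2 * D2 q" by (rule cmp) (use that assms(4) in auto)
    have e1: "D2 q = q^2 * h q" "D2 q0 = q0^2 * h q0" using that assms(4) by (simp_all add: h_def)
    have "(q0/q)^2 * D2 q - D2 q \<le> D2 q0 - (q/q0)^2 * D2 q0" using A B by linarith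
    hence "(q0^2 - q^2) * h q \<le> (q0^2 - q^2) * h q0"
      unfolding e1 using that assms(4) by (simp add: power_divide field_simps)
    moreover have "q^2 < q0^2" using lt that by (intro power_strict_mono) auto
    ultimately show ?thesis by (simp add: mult_le_cancel_left)
  qed simp
  have ev1: "eventually (\<lambda>q. 0 \<le> charge (a q) (g q)) (at_right 0)"
    and ev2: "eventually (\<lambda>q. charge (a q) (g q) \<le> q * h q0) (at_right 0)"
  proof -
    have ev: "eventually (\<lambda>q. 0 < q \<and> q \<le> q0) (at_right (0::real))"
      using assms(4) by (auto simp: eventually_at_right_field intro!: exI[of _ q0])
    show "eventually (\<lambda>q. 0 \<le> charge (a q) (g q)) (at_right 0)"
      using ev
    proof eventually_elim
      case (elim q)
      then have "q * charge (a q) (g q) \<ge> 0" using K[of q] P[of q] by simp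
      then show ?case using elim by (simp add: zero_le_mult_iff)
    qed
    show "eventually (\<lambda>q. charge (a q) (g q) \<le> q * h q0) (at_right 0)"
      using ev
    proof eventually_elim
      case (elim q)
      then have "charge (a q) (g q) = q * h q" using K[of q] by (simp add: h_def power2_eq_square)
      then show ?case using mono[of q] elim by (simp add: mult_left_mono)
    qed
  qed
  have "((\<lambda>q. q * h q0) \<longlongrightarrow> 0 * h q0) (at_right 0)" by (intro tendsto_intros)
  then have "((\<lambda>q. q * h q0) \<longlongrightarrow> 0) (at_right 0)" by simp
  from tendsto_sandwich[OF ev1 ev2 tendsto_const this] show ?thesis .
qed

end
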